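(* Let $D:\mathbb{R}^{n+1}\to\mathbb{R}^n$ be the difference map $D(b)=(b_2-b_1,b_3-b_2,\dots,b_{n+1}-b_n)^t$ and $D^\star:\mathbb{R}^n\to\mathbb{R}^{n+1}$ its transpose, $D^\star(a)=(-a_1,a_1-a_2,\dots,a_{n-1}-a_n,a_n)^t$. On $\mathbb{R}^n$ with the standard inner product define $\|a\|_X=\|D^\star a\|_1$ and $\|a\|_Y=\min\{\|b\|_\infty: b\in\mathbb{R}^{n+1},\ Db=a\}$. Then $\|\cdot\|_X$ and $\|\cdot\|_Y$ are norms dual to each other, and they are tight: every vector $c\in\mathbb{R}^n$ is tight.
   Context: For a norm $\|\cdot\|_X$ with dual norm $\|\cdot\|_Y$ on a euclidean space with $\|v\|_2=\sqrt{\langle v,v\rangle}$, and norms $\|\cdot\|_P,\|\cdot\|_Q$ among $X,Y,2$, a decomposition $c=a+b$ is a $PQ$-decomposition if for every decomposition $c=a'+b'$: $\|a'\|_P>\|a\|_P$, or $\|b'\|_Q>\|b\|_Q$, or $(\|a'\|_P,\|b'\|_Q)=(\|a\|_P,\|b\|_Q)$. A vector $c$ is tight if every $X2$-decomposition of $c$ is an $XY$-decomposition. *)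

theory Defs
  imports Complex_Main
begin

text \<open>Vectors of R^n are modelled as functions nat => real vanishing at indices >= n
  (0-based: a 0, ..., a (n-1)); vectors of R^(n+1) vanish at indices > n.\<close>

definition V :: "nat \<Rightarrow> (nat \<Rightarrow> real) set" where
  "V n = {a. \<forall>i\<ge>n. a i = 0}"

definition W :: "nat \<Rightarrow> (nat \<Rightarrow> real) set" where
  "W n = {b. \<forall>i>n. b i = 0}"

definition vadd :: "(nat \<Rightarrow> real) \<Rightarrow> (nat \<Rightarrow> real) \<Rightarrow> nat \<Rightarrow> real" where
  "vadd a b = (\<lambda>i. a i + b i)"

definition vscale :: "real \<Rightarrow> (nat \<Rightarrow> real) \<Rightarrow> nat \<Rightarrow> real" where
  "vscale r a = (\<lambda>i. r * a i)"

definition ip :: "nat \<Rightarrow> (nat \<Rightarrow> real) \<Rightarrow> (nat \<Rightarrow> real) \<Rightarrow> real" where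
  "ip n a b = (\<Sum>i<n. a i * b i)"

definition norm2 :: "nat \<Rightarrow> (nat \<Rightarrow> real) \<Rightarrow> real" where
  "norm2 n a = sqrt (ip n a a)"

definition Dm :: "nat \<Rightarrow> (nat \<Rightarrow> real) \<Rightarrow> nat \<Rightarrow> real" where
  "Dm n b = (\<lambda>i. if i < n then b (Suc i) - b i else 0)"

definition Dstar :: "nat \<Rightarrow> (nat \<Rightarrow> real) \<Rightarrow> nat \<Rightarrow> real" where
  "Dstar n a = (\<lambda>j. if j \<le> n then (if j = 0 then 0 else a (j - 1)) - (if j < n then a j else 0) else 0)"

definition norm1W :: "nat \<Rightarrow> (nat \<Rightarrow> real) \<Rightarrow> real" where
  "norm1W n b = (\<Sum>j\<le>n. \<bar>b j\<bar>)"

definition supnormW :: "nat \<Rightarrow> (nat \<Rightarrow> real) \<Rightarrow> real" where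
  "supnormW n b = Max ((\<lambda>j. \<bar>b j\<bar>) ` {..n})"

definition normX :: "nat \<Rightarrow> (nat \<Rightarrow> real) \<Rightarrow> real" where
  "normX n a = norm1W n (Dstar n a)"

definition normY :: "nat \<Rightarrow> (nat \<Rightarrow> real) \<Rightarrow> real" where
  "normY n a = Inf (supnormW n ` {b \<in> W n. Dm n b = a})"

definition is_norm_on :: "(nat \<Rightarrow> real) set \<Rightarrow> ((nat \<Rightarrow> real) \<Rightarrow> real) \<Rightarrow> bool" where
  "is_norm_on S N \<longleftrightarrow>
     (\<forall>a\<in>S. N a \<ge> 0 \<and> (N a = 0 \<longleftrightarrow> a = (\<lambda>_. 0))) \<and>
     (\<forall>a\<in>S. \<forall>r. N (vscale r a) = \<bar>r\<bar> * N a) \<and>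
     (\<forall>a\<in>S. \<forall>b\<in>S. N (vadd a b) \<le> N a + N b)"

definition is_decomp :: "(nat \<Rightarrow> real) set \<Rightarrow> ((nat \<Rightarrow> real) \<Rightarrow> real) \<Rightarrow> ((nat \<Rightarrow> real) \<Rightarrow> real)
   \<Rightarrow> (nat \<Rightarrow> real) \<Rightarrow> (nat \<Rightarrow> real) \<Rightarrow> (nat \<Rightarrow> real) \<Rightarrow> bool" where
  "is_decomp S P Q c a b \<longleftrightarrow> a \<in> S \<and> b \<in> S \<and> c = vadd a b \<and>
     (\<forall>a'\<in>S. \<forall>b'\<in>S. c = vadd a' b' \<longrightarrow>
        P a' > P a \<or> Q b' > Q b \<or> (P a' = P a \<and> Q b' = Q b))"

definition tight :: "(nat \<Rightarrow> real) set \<Rightarrow> ((nat \<Rightarrow> real) \<Rightarrow> real) \<Rightarrow> ((nat \<Rightarrow> real) \<Rightarrow> real)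
   \<Rightarrow> ((nat \<Rightarrow> real) \<Rightarrow> real) \<Rightarrow> (nat \<Rightarrow> real) \<Rightarrow> bool" where
  "tight S NX NY N2 c \<longleftrightarrow> (\<forall>a b. is_decomp S NX N2 c a b \<longrightarrow> is_decomp S NX NY c a b)"

end

theory Submission
  imports Defs
begin


lemma supnorm_ge: "j \<le> n \<Longrightarrow> \<bar>b j\<bar> \<le> supnormW n b"
  unfolding supnormW_def by (rule Max_ge) auto

lemma supnorm_le: "(\<And>j. j \<le> n \<Longrightarrow> \<bar>b j\<bar> \<le> M) \<Longrightarrow> supnormW n b \<le> M"
  unfolding supnormW_def by (subst Max_le_iff) auto

lemma supnorm_nonneg: "0 \<le> supnormW n b"
  using supnorm_ge[of 0 n b] by simp

lemma DD: "j \<le> N \<Longrightarrow> Dstar N (Dm N v) j =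
   (if j = 0 then 0 else v j - v (j - 1)) - (if j < N then v (Suc j) - v j else 0)"
  unfolding Dstar_def Dm_def by auto

lemma adjoint: "ip n (Dm n w) z = (\<Sum>j\<le>n. w j * Dstar n z j)"
proof -
  have "(\<Sum>j\<le>n. w j * Dstar n z j) = (\<Sum>j\<le>n. w j * (if j = 0 then 0 else z (j - 1)))
     - (\<Sum>j\<le>n. w j * (if j < n then z j else 0))"
    unfolding Dstar_def by (simp add: right_diff_distrib sum_subtractf)
  also have "(\<Sum>j\<le>n. w j * (if j = 0 then 0 else z (j - 1))) = (\<Sum>i<n. w (Suc i) * z i)"
  proof (cases n)
    case 0 then show ?thesis by simp
  next
    case (Suc m)
    show ?thesis unfolding Suc sum.atMost_Suc_shift by (simp add: lessThan_Suc_atMost)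
  qed
  also have "(\<Sum>j\<le>n. w j * (if j < n then z j else 0)) = (\<Sum>i<n. w i * z i)"
    by (simp add: lessThan_Suc_atMost[symmetric])
  finally show ?thesis unfolding ip_def Dm_def by (simp add: left_diff_distrib sum_subtractf)
qed

lemma holder: "ip n (Dm n w) z \<le> supnormW n w * normX n z"
proof -
  have "ip n (Dm n w) z = (\<Sum>j\<le>n. w j * Dstar n z j)" by (rule adjoint)
  also have "\<dots> \<le> (\<Sum>j\<le>n. supnormW n w * \<bar>Dstar n z j\<bar>)"
  proof (rule sum_mono)
    fix j assume "j \<in> {..n}"
    then have "\<bar>w j\<bar> \<le> supnormW n w" by (simp add: supnorm_ge)
    then have "\<bar>w j\<bar> * \<bar>Dstar n z j\<bar> \<le> supnormW n w * \<bar>Dstar n z j\<bar>"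
      by (simp add: mult_right_mono)
    moreover have "w j * Dstar n z j \<le> \<bar>w j\<bar> * \<bar>Dstar n z j\<bar>"
      by (metis abs_ge_self abs_mult)
    ultimately show "w j * Dstar n z j \<le> supnormW n w * \<bar>Dstar n z j\<bar>" by linarith
  qed
  also have "\<dots> = supnormW n w * normX n z"
    unfolding normX_def norm1W_def by (simp add: sum_distrib_left)
  finally show ?thesis .
qed

lemma sum_Dstar: "(\<Sum>j\<le>n. Dstar n a j) = 0"
proof -
  have "ip n (Dm n (\<lambda>_. 1)) a = 0" unfolding ip_def Dm_def by simp
  then show ?thesis using adjoint[of n "\<lambda>_. 1" a] by simp
qed

lemma Dstar_inj: assumes "a \<in> V n" "\<And>j. j \<le> n \<Longrightarrow> Dstar n a j = 0"
  shows "a = (\<lambda>_. 0)"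
proof -
  have "\<forall>j. j < n \<longrightarrow> a j = 0"
  proof
    fix j show "j < n \<longrightarrow> a j = 0"
    proof (induction j)
      case 0 then show ?case using assms(2)[of 0] unfolding Dstar_def by auto
    next
      case (Suc j) then show ?case using assms(2)[of "Suc j"] unfolding Dstar_def by auto
    qed
  qed
  then show ?thesis using assms(1) unfolding V_def by (intro ext) (simp add: not_less; metis le_less_linear)
qed

lemma Dm_const: assumes "Dm n v = (\<lambda>_. 0)" shows "j \<le> n \<Longrightarrow> v j = v 0"
proof (induction j)
  case 0 then show ?case by simp
next
  case (Suc j)
  have "Dm n v j = 0" using assms by simp
  with Suc show ?case unfolding Dm_def by auto
qed

lemma Dm_V: "Dm n v \<in> V n" unfolding Dm_def V_def by auto

lemma Dstar_add: "Dstar n (vadd a b) j = Dstar n a j + Dstar n b j"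
  unfolding Dstar_def vadd_def by auto
lemma Dstar_scale: "Dstar n (vscale r a) j = r * Dstar n a j"
  unfolding Dstar_def vscale_def by (auto simp: algebra_simps)
lemma Dm_add: "Dm n (vadd a b) = vadd (Dm n a) (Dm n b)"
  unfolding Dm_def vadd_def by auto
lemma Dm_scale: "Dm n (vscale r a) = vscale r (Dm n a)"
  unfolding Dm_def vscale_def by (auto simp: algebra_simps)

lemma normX_nonneg: "0 \<le> normX n a" unfolding normX_def norm1W_def by (simp add: sum_nonneg)

lemma normX_scale: "normX n (vscale r a) = \<bar>r\<bar> * normX n a"
  unfolding normX_def norm1W_def by (simp add: Dstar_scale abs_mult sum_distrib_left)

lemma normX_add: "normX n (vadd a b) \<le> normX n a + normX n b"
  unfolding normX_def norm1W_def Dstar_add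
  by (simp add: sum.distrib[symmetric] sum_mono abs_triangle_ineq)

lemma normX_zero: assumes "a \<in> V n" "normX n a = 0" shows "a = (\<lambda>_. 0)"
proof (rule Dstar_inj[OF assms(1)])
  fix j assume "j \<le> n"
  have "\<forall>j\<in>{..n}. \<bar>Dstar n a j\<bar> = 0"
    using assms(2) unfolding normX_def norm1W_def by (subst sum_nonneg_eq_0_iff[symmetric]) auto
  with \<open>j \<le> n\<close> show "Dstar n a j = 0" by auto
qed

lemma normX_0: "normX n (\<lambda>_. 0) = 0" unfolding normX_def norm1W_def Dstar_def by simp



lemma tail_sum: fixes a :: "nat \<Rightarrow> real" shows "q \<le> n \<Longrightarrow> (\<Sum>i<n. if q \<le> i then a i else 0) = (\<Sum>i<n. a i) - (\<Sum>i<q. (a i::real))"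
proof (induction n)
  case 0 then show ?case by simp
next
  case (Suc n)
  show ?case
  proof (cases "q \<le> n")
    case True with Suc show ?thesis by simp
  next
    case False with Suc.prems have "q = Suc n" by simp
    then show ?thesis by simp
  qed
qed

lemma Y_lower: assumes "\<And>b. b \<in> W n \<Longrightarrow> Dm n b = a \<Longrightarrow> y \<le> supnormW n b"
  and "b0 \<in> W n" "Dm n b0 = a"
  shows "y \<le> normY n a"
  unfolding normY_def using assms by (intro cInf_greatest) auto

lemma Y_upper: assumes "b \<in> W n" shows "normY n (Dm n b) \<le> supnormW n b"
  unfolding normY_def using assms supnorm_nonneg
  by (intro cInf_lower) (auto simp: bdd_below_def intro!: exI[of _ 0])

lemma Y_main: assumes "a \<in> V n"
  shows "\<exists>b\<in>W n. \<exists>x\<in>V n. Dm n b = a \<and> supnormW n b = normY n a \<and> normX n x \<le> 1 \<and> ip n a x = normY n a"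
proof -
  define P where "P k = (\<Sum>i<k. a i)" for k
  define M where "M = Max (P ` {..n})"
  define m where "m = Min (P ` {..n})"
  have "M \<in> P ` {..n}" unfolding M_def by (rule Max_in) auto
  then obtain p where p: "p \<le> n" "P p = M" by auto
  have "m \<in> P ` {..n}" unfolding m_def by (rule Min_in) auto
  then obtain q where q: "q \<le> n" "P q = m" by auto
  have Mge: "P j \<le> M" if "j \<le> n" for j unfolding M_def using that by (intro Max_ge) auto
  have mle: "m \<le> P j" if "j \<le> n" for j unfolding m_def using that by (intro Min_le) auto
  define b where "b j = (if j \<le> n then P j - (M+m)/2 else 0)" for j
  define x where "x j = (if j < n then (if q \<le> j then 1/2 else 0) - (if p \<le> j then 1/2 else 0) else (0::real))" for j
  have bW: "b \<in> W n" unfolding W_def b_def by auto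
  have Db: "Dm n b = a"
  proof
    fix i show "Dm n b i = a i"
    proof (cases "i < n")
      case True then show ?thesis unfolding Dm_def b_def P_def by simp
    next
      case False then show ?thesis using assms unfolding Dm_def V_def by simp
    qed
  qed
  have sb: "supnormW n b \<le> (M-m)/2"
  proof (rule supnorm_le)
    fix j assume "j \<le> n"
    have "\<bar>P j - (M+m)/2\<bar> \<le> (M - m)/2" using Mge[OF \<open>j \<le> n\<close>] mle[OF \<open>j \<le> n\<close>]
      unfolding abs_le_iff by (auto simp: field_simps)
    then show "\<bar>b j\<bar> \<le> (M - m)/2" using \<open>j \<le> n\<close> unfolding b_def by auto
  qed
  have xV: "x \<in> V n" unfolding V_def x_def by auto
  have Dx: "Dstar n x j = (if j = p then 1/2 else 0) - (if j = q then 1/2 else 0)" if "j \<le> n" for j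
    using that p(1) q(1) unfolding Dstar_def x_def by auto
  have "normX n x \<le> (\<Sum>j\<le>n. (if j = p then 1/2 else 0) + (if j = q then 1/2 else 0))"
    unfolding normX_def norm1W_def by (intro sum_mono) (auto simp: Dx)
  also have "\<dots> = 1" using p(1) q(1) by (simp add: sum.distrib)
  finally have Xx: "normX n x \<le> 1" .
  have "ip n a x = (\<Sum>i<n. (if q \<le> i then a i else 0)/2 - (if p \<le> i then a i else 0)/2)"
    unfolding ip_def x_def by (intro sum.cong) auto
  also have "\<dots> = (\<Sum>i<n. (if q \<le> i then a i else 0)) / 2 - (\<Sum>i<n. (if p \<le> i then a i else 0)) / 2"
    by (simp add: sum_subtractf sum_divide_distrib)
  also have "\<dots> = (M - m)/2" using tail_sum[OF p(1), of a] tail_sum[OF q(1), of a] p q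
    unfolding P_def by (simp add: field_simps)
  finally have ipx: "ip n a x = (M - m)/2" .
  have lo: "ip n a x \<le> normY n a"
  proof (rule Y_lower[OF _ bW Db])
    fix b' assume "b' \<in> W n" "Dm n b' = a"
    then have "ip n a x \<le> supnormW n b' * normX n x" using holder[of n b' x] by simp
    also have "\<dots> \<le> supnormW n b'" using Xx supnorm_nonneg[of n b']
      by (simp add: mult_left_le)
    finally show "ip n a x \<le> supnormW n b'" .
  qed
  have up: "normY n a \<le> supnormW n b" using Y_upper[OF bW] Db by simp
  show ?thesis using lo up ipx sb bW xV Db Xx by (intro bexI[of _ b] bexI[of _ x]) auto
qed



lemma Y_wit: "a \<in> V n \<Longrightarrow> \<exists>b\<in>W n. Dm n b = a \<and> supnormW n b = normY n a"
  using Y_main by blast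

lemma dual_att: "a \<in> V n \<Longrightarrow> \<exists>x\<in>V n. normX n x \<le> 1 \<and> ip n a x = normY n a"
  using Y_main by blast

lemma Y_nonneg: "a \<in> V n \<Longrightarrow> 0 \<le> normY n a"
  using Y_wit supnorm_nonneg by metis

lemma V_scale: "a \<in> V n \<Longrightarrow> vscale r a \<in> V n" unfolding V_def vscale_def by auto
lemma V_add: "a \<in> V n \<Longrightarrow> b \<in> V n \<Longrightarrow> vadd a b \<in> V n" unfolding V_def vadd_def by auto
lemma W_scale: "a \<in> W n \<Longrightarrow> vscale r a \<in> W n" unfolding W_def vscale_def by auto
lemma W_add: "a \<in> W n \<Longrightarrow> b \<in> W n \<Longrightarrow> vadd a b \<in> W n" unfolding W_def vadd_def by auto

lemma supnorm_scale: "supnormW n (vscale r b) \<le> \<bar>r\<bar> * supnormW n b"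
  by (rule supnorm_le) (auto simp: vscale_def abs_mult intro: mult_left_mono supnorm_ge)

lemma supnorm_add: "supnormW n (vadd a b) \<le> supnormW n a + supnormW n b"
proof (rule supnorm_le)
  fix j assume "j \<le> n"
  then have "\<bar>a j\<bar> \<le> supnormW n a" "\<bar>b j\<bar> \<le> supnormW n b" by (auto intro: supnorm_ge)
  then show "\<bar>vadd a b j\<bar> \<le> supnormW n a + supnormW n b" unfolding vadd_def by linarith
qed

lemma Y_scale_le: assumes "a \<in> V n" shows "normY n (vscale r a) \<le> \<bar>r\<bar> * normY n a"
proof -
  obtain b where b: "b \<in> W n" "Dm n b = a" "supnormW n b = normY n a" using Y_wit[OF assms] by blast
  have "normY n (vscale r a) = normY n (Dm n (vscale r b))" using b by (simp add: Dm_scale)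
  also have "\<dots> \<le> supnormW n (vscale r b)" by (rule Y_upper[OF W_scale[OF b(1)]])
  also have "\<dots> \<le> \<bar>r\<bar> * normY n a" using supnorm_scale[of n r b] b by simp
  finally show ?thesis .
qed

lemma Y_scale: assumes "a \<in> V n" shows "normY n (vscale r a) = \<bar>r\<bar> * normY n a"
proof (cases "r = 0")
  case True
  have "vscale r a = Dm n (\<lambda>_. 0)" using True unfolding vscale_def Dm_def by auto
  then have "normY n (vscale r a) \<le> 0" using Y_upper[of "\<lambda>_. 0" n] supnorm_le[of n "\<lambda>_. 0" 0]
    unfolding W_def by auto
  moreover have "0 \<le> normY n (vscale r a)" by (rule Y_nonneg[OF V_scale[OF assms]])
  ultimately show ?thesis using True by simp
next
  case False
  have "vscale (1/r) (vscale r a) = a" using False unfolding vscale_def by auto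
  then have "normY n a \<le> \<bar>1/r\<bar> * normY n (vscale r a)"
    using Y_scale_le[OF V_scale[OF assms], of "1/r" r] by simp
  then have "\<bar>r\<bar> * normY n a \<le> normY n (vscale r a)" using False
    by (simp add: field_simps)
  with Y_scale_le[OF assms, of r] show ?thesis by simp
qed

lemma Y_add: assumes "a \<in> V n" "b \<in> V n" shows "normY n (vadd a b) \<le> normY n a + normY n b"
proof -
  obtain wa where wa: "wa \<in> W n" "Dm n wa = a" "supnormW n wa = normY n a" using Y_wit[OF assms(1)] by blast
  obtain wb where wb: "wb \<in> W n" "Dm n wb = b" "supnormW n wb = normY n b" using Y_wit[OF assms(2)] by blast
  have "normY n (vadd a b) = normY n (Dm n (vadd wa wb))" using wa wb by (simp add: Dm_add)
  also have "\<dots> \<le> supnormW n (vadd wa wb)" by (rule Y_upper[OF W_add[OF wa(1) wb(1)]])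
  also have "\<dots> \<le> normY n a + normY n b" using supnorm_add[of n wa wb] wa wb by simp
  finally show ?thesis .
qed

lemma Y_zero: assumes "a \<in> V n" "normY n a = 0" shows "a = (\<lambda>_. 0)"
proof -
  obtain b where b: "b \<in> W n" "Dm n b = a" "supnormW n b = 0" using Y_wit[OF assms(1)] assms(2) by auto
  have "b j = 0" if "j \<le> n" for j using supnorm_ge[OF that, of b] b(3) by simp
  then show ?thesis using b(2) unfolding Dm_def by (auto intro!: ext)
qed

lemma Y_0: "normY n (\<lambda>_. 0) = 0"
proof -
  have "(\<lambda>_. 0::real) = vscale 0 (\<lambda>_. 0)" unfolding vscale_def by simp
  moreover have "(\<lambda>_. 0::real) \<in> V n" unfolding V_def by simp
  ultimately show ?thesis using Y_scale[of "\<lambda>_. 0" n 0] by simp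
qed

lemma normY_norm: "is_norm_on (V n) (normY n)"
  unfolding is_norm_on_def using Y_nonneg Y_zero Y_0 Y_scale Y_add by metis

lemma normX_norm: "is_norm_on (V n) (normX n)"
  unfolding is_norm_on_def using normX_nonneg normX_zero normX_0 normX_scale normX_add by metis

lemma duality: assumes "a \<in> V n"
  shows "normY n a = Sup {ip n a x | x. x \<in> V n \<and> normX n x \<le> 1}"
proof -
  obtain x0 where x0: "x0 \<in> V n" "normX n x0 \<le> 1" "ip n a x0 = normY n a" using dual_att[OF assms] by blast
  obtain b where b: "b \<in> W n" "Dm n b = a" "supnormW n b = normY n a" using Y_wit[OF assms] by blast
  have "y \<le> normY n a" if "y \<in> {ip n a x | x. x \<in> V n \<and> normX n x \<le> 1}" for y
  proof -
    from that obtain x where x: "y = ip n a x" "normX n x \<le> 1" by auto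
    have "y \<le> supnormW n b * normX n x" using holder[of n b x] b x by simp
    also have "\<dots> \<le> supnormW n b" using x(2) supnorm_nonneg[of n b] by (simp add: mult_left_le)
    finally show ?thesis using b by simp
  qed
  moreover have "normY n a \<in> {ip n a x | x. x \<in> V n \<and> normX n x \<le> 1}" using x0 by force
  ultimately show ?thesis by (intro cSup_eq_maximum[symmetric]) auto
qed



lemma DD': "Dstar N (Dm N v) j = (if j \<le> N then
   (if j = 0 then 0 else v j - v (j - 1)) - (if j < N then v (Suc j) - v j else 0) else 0)"
  unfolding Dstar_def Dm_def by auto

lemma pm1_prod: "(x::real) = 1 \<or> x = -1 \<Longrightarrow> y = 1 \<or> y = -1 \<Longrightarrow> x * y \<le> 1"
  by auto

lemma pl:
  fixes \<sigma> :: "nat \<Rightarrow> real"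
  shows "K \<subseteq> {..N} \<Longrightarrow> K \<noteq> {} \<Longrightarrow> (\<forall>j\<in>K. \<sigma> j = 1 \<or> \<sigma> j = -1) \<Longrightarrow>
   \<exists>v. (\<forall>j\<le>N. \<bar>v j\<bar> \<le> 1) \<and> (\<forall>j\<in>K. v j = \<sigma> j) \<and>
       (\<forall>j\<le>N. j \<notin> K \<longrightarrow> Dstar N (Dm N v) j = 0) \<and> (\<forall>j\<in>K. 0 \<le> \<sigma> j * Dstar N (Dm N v) j)"
proof (induction N arbitrary: K rule: less_induct)
  case (less N)
  show ?case
  proof (cases "N \<in> K")
    case False
    have "N \<noteq> 0"
    proof
      assume "N = 0" with less.prems(1,2) False show False by auto
    qed
    define M where "M = N - 1"
    have NM: "N = Suc M" using \<open>N \<noteq> 0\<close> unfolding M_def by simp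
    have "K \<subseteq> {..M}" using less.prems(1) False NM by (auto simp: le_Suc_eq)
    then obtain v where v: "\<forall>j\<le>M. \<bar>v j\<bar> \<le> 1" "\<forall>j\<in>K. v j = \<sigma> j"
       "\<forall>j\<le>M. j \<notin> K \<longrightarrow> Dstar M (Dm M v) j = 0" "\<forall>j\<in>K. 0 \<le> \<sigma> j * Dstar M (Dm M v) j"
      using less.IH[of M K] less.prems NM by auto
    define v' where "v' j = (if j \<le> M then v j else v M)" for j
    have eq: "Dstar N (Dm N v') j = Dstar M (Dm M v) j" if "j \<le> M" for j
      using that using NM
      by (cases "j < M") (auto simp: v'_def DD')
    have eqN: "Dstar N (Dm N v') N = 0" unfolding DD' using NM by (simp add: v'_def)
    have KM: "j \<in> K \<Longrightarrow> j \<le> M" for j using \<open>K \<subseteq> {..M}\<close> by auto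
    show ?thesis
    proof (intro exI[of _ v'] conjI ballI allI impI)
      fix j assume "j \<le> N" then show "\<bar>v' j\<bar> \<le> 1" using v(1) by (auto simp: v'_def)
    next
      fix j assume "j \<in> K" then show "v' j = \<sigma> j" using v(2) KM by (auto simp: v'_def)
    next
      fix j assume "j \<le> N" "j \<notin> K" then show "Dstar N (Dm N v') j = 0"
        using eq v(3) eqN NM by (cases "j \<le> M") (auto simp: le_Suc_eq)
    next
      fix j assume "j \<in> K" then show "0 \<le> \<sigma> j * Dstar N (Dm N v') j"
        using eq[OF KM] v(4) by auto
    qed
  next
    case True
    define K' where "K' = K - {N}"
    show ?thesis
    proof (cases "K' = {}")
      case True
      then have KN: "K = {N}" using \<open>N \<in> K\<close> unfolding K'_def by auto
      show ?thesis
        using less.prems(3) KN by (intro exI[of _ "\<lambda>_. \<sigma> N"]) (auto simp: DD)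
    next
      case False
      have finK': "finite K'" using less.prems(1) unfolding K'_def by (auto intro: finite_subset)
      define M where "M = Max K'"
      have MK': "M \<in> K'" unfolding M_def using finK' False by (rule Max_in)
      have KM: "j \<le> M" if "j \<in> K'" for j unfolding M_def using finK' that by (rule Max_ge)
      have MN: "M < N" using MK' less.prems(1) unfolding K'_def by auto
      have sM: "\<sigma> M = 1 \<or> \<sigma> M = -1" "\<sigma> N = 1 \<or> \<sigma> N = -1"
        using less.prems(3) MK' \<open>N \<in> K\<close> unfolding K'_def by auto
      have K'M: "K' \<subseteq> {..M}" using KM by auto
      have sK': "\<forall>j\<in>K'. \<sigma> j = 1 \<or> \<sigma> j = -1" using less.prems(3) unfolding K'_def by auto
      obtain v where v: "\<forall>j\<le>M. \<bar>v j\<bar> \<le> 1" "\<forall>j\<in>K'. v j = \<sigma> j"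
         "\<forall>j\<le>M. j \<notin> K' \<longrightarrow> Dstar M (Dm M v) j = 0" "\<forall>j\<in>K'. 0 \<le> \<sigma> j * Dstar M (Dm M v) j"
        using less.IH[OF MN K'M False sK'] by blast
      define s where "s = (\<sigma> N - \<sigma> M) / (real N - real M)"
      define v' where "v' j = (if j \<le> M then v j else \<sigma> M + s * (real j - real M))" for j
      have vM: "v M = \<sigma> M" using v(2) MK' by auto
      have lin: "v' j = \<sigma> M + s * (real j - real M)" if "M \<le> j" for j
        using that vM by (cases "j = M") (auto simp: v'_def)
      have NMpos: "real N - real M > 0" using MN by simp
      have sN: "\<sigma> N * s \<ge> 0"
      proof -
        have "\<sigma> N * \<sigma> M \<le> 1" using sM by auto
        then have "0 \<le> \<sigma> N * (\<sigma> N - \<sigma> M)" using sM by (auto simp: algebra_simps)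
        moreover have "\<sigma> N * s = (\<sigma> N * (\<sigma> N - \<sigma> M)) / (real N - real M)" unfolding s_def by simp
        ultimately show ?thesis using NMpos by (metis divide_nonneg_pos)
      qed
      have sMs: "\<sigma> M * s \<le> 0"
      proof -
        have "\<sigma> N * \<sigma> M \<le> 1" using sM by auto
        then have "\<sigma> M * (\<sigma> N - \<sigma> M) \<le> 0" using sM by (auto simp: algebra_simps)
        moreover have "\<sigma> M * s = (\<sigma> M * (\<sigma> N - \<sigma> M)) / (real N - real M)" unfolding s_def by simp
        ultimately show ?thesis using NMpos by (metis divide_nonpos_pos)
      qed
      have eq: "Dstar N (Dm N v') j = Dstar M (Dm M v) j" if "j < M" for j
        using that MN unfolding DD' DD' by (auto simp: v'_def)
      have eqMM: "Dstar N (Dm N v') M = Dstar M (Dm M v) M - s"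
        using MN lin[of "Suc M"] unfolding DD' DD' by (auto simp: v'_def vM)
      have eqN: "Dstar N (Dm N v') N = s"
      proof -
        have "N \<noteq> 0" "M \<le> N - 1" using MN by auto
        then have "v' N - v' (N - 1) = s" using lin[of N, OF less_imp_le[OF MN]] lin[of "N - 1"]
          by (simp add: algebra_simps of_nat_diff)
        then show ?thesis using \<open>N \<noteq> 0\<close> unfolding DD' by simp
      qed
      have Suc_le_D': "M \<le> j - 1" if "M < j" for j using that by simp
      have eqmid: "Dstar N (Dm N v') j = 0" if "M < j" "j < N" for j
      proof -
        have "v' j - v' (j - 1) = s" "v' (Suc j) - v' j = s"
          using that lin[of j] lin[of "j - 1", OF Suc_le_D'] lin[of "Suc j"] by (auto simp: algebra_simps of_nat_diff)
        then show ?thesis using that unfolding DD' by simp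
      qed
      show ?thesis
      proof (intro exI[of _ v'] conjI ballI allI impI)
        fix j assume "j \<le> N"
        show "\<bar>v' j\<bar> \<le> 1"
        proof (cases "j \<le> M")
          case True then show ?thesis using v(1) by (simp add: v'_def)
        next
          case False
          define t where "t = (real j - real M) / (real N - real M)"
          have t: "0 \<le> t" "t \<le> 1" using False \<open>j \<le> N\<close> NMpos unfolding t_def by auto
          have "v' j = \<sigma> M + (\<sigma> N - \<sigma> M) * t" using False NMpos unfolding v'_def s_def t_def by simp
          then show ?thesis using sM t by auto
        qed
      next
        fix j assume "j \<in> K"
        show "v' j = \<sigma> j"
        proof (cases "j = N")
          case True then show ?thesis using lin[of N] MN NMpos unfolding s_def by simp
        next
          case False then have "j \<in> K'" using \<open>j \<in> K\<close> unfolding K'_def by auto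
          then show ?thesis using v(2) KM by (simp add: v'_def)
        qed
      next
        fix j assume j: "j \<le> N" "j \<notin> K"
        then have "j \<noteq> N" "j \<noteq> M" "j \<notin> K'" using True MK' unfolding K'_def by auto
        show "Dstar N (Dm N v') j = 0"
        proof (cases "j < M")
          case True then show ?thesis using eq v(3) \<open>j \<notin> K'\<close> by simp
        next
          case False then show ?thesis using eqmid \<open>j \<noteq> N\<close> \<open>j \<noteq> M\<close> j(1) by simp
        qed
      next
        fix j assume "j \<in> K"
        show "0 \<le> \<sigma> j * Dstar N (Dm N v') j"
        proof (cases "j = N")
          case True then show ?thesis using eqN sN by simp
        next
          case False then have jK': "j \<in> K'" using \<open>j \<in> K\<close> unfolding K'_def by auto
          show ?thesis
          proof (cases "j = M")
            case True
            have "0 \<le> \<sigma> M * Dstar M (Dm M v) M" using v(4) MK' by auto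
            then show ?thesis using True eqMM sMs by (simp add: right_diff_distrib)
          next
            case False then have "j < M" using KM[OF jK'] by simp
            then show ?thesis using eq v(4) jK' by simp
          qed
        qed
      qed
    qed
  qed
qed



lemma ip_comm: "ip n a b = ip n b a" unfolding ip_def by (simp add: mult.commute)
lemma ip_add_right: "ip n z (vadd a b) = ip n z a + ip n z b"
  unfolding ip_def vadd_def by (simp add: distrib_left sum.distrib)
lemma ip_scale_right: "ip n z (vscale t a) = t * ip n z a"
  unfolding ip_def vscale_def by (simp add: sum_distrib_left algebra_simps)
lemma ip_diff_right: "ip n z (\<lambda>i. a i - b i) = ip n z a - ip n z b"
  unfolding ip_def by (simp add: right_diff_distrib sum_subtractf)
lemma ip_expand: "ip n (\<lambda>i. b i - s * d i) (\<lambda>i. b i - s * d i) = ip n b b - 2 * s * ip n b d + s^2 * ip n d d"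
proof -
  have "ip n (\<lambda>i. b i - s * d i) (\<lambda>i. b i - s * d i) = (\<Sum>i<n. b i * b i - 2 * s * (b i * d i) + s^2 * (d i * d i))"
    unfolding ip_def by (intro sum.cong) (auto simp: algebra_simps power2_eq_square)
  also have "\<dots> = ip n b b - 2 * s * ip n b d + s^2 * ip n d d"
    unfolding ip_def by (simp add: sum.distrib sum_subtractf sum_distrib_left)
  finally show ?thesis .
qed
lemma ip_self_nonneg: "0 \<le> ip n d d" unfolding ip_def by (simp add: sum_nonneg)

lemma step1: assumes "is_decomp (V n) (normX n) (norm2 n) c a b"
  shows "normX n a * normY n b \<le> ip n b a"
proof -
  from assms have aV: "a \<in> V n" and bV: "b \<in> V n" and ceq: "c = vadd a b"
    and opt: "\<forall>a'\<in>V n. \<forall>b'\<in>V n. c = vadd a' b' \<longrightarrow> normX n a' > normX n a \<or> norm2 n b' > norm2 n b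
       \<or> (normX n a' = normX n a \<and> norm2 n b' = norm2 n b)"
    unfolding is_decomp_def by auto
  define t where "t = normX n a"
  have key: "ip n b a' \<le> ip n b a" if a'V: "a' \<in> V n" and Xa': "normX n a' \<le> t" for a'
  proof (rule ccontr)
    assume neg: "\<not> ip n b a' \<le> ip n b a"
    define d where "d i = a' i - a i" for i
    define g where "g = ip n b d"
    define h where "h = ip n d d"
    have gpos: "g > 0" using neg unfolding g_def d_def ip_diff_right by simp
    have h0: "h \<ge> 0" unfolding h_def by (rule ip_self_nonneg)
    define s where "s = (if h = 0 then 1 else min 1 (g / h))"
    have s0: "s > 0" "s \<le> 1" using gpos h0 unfolding s_def by auto
    have sh: "s * h \<le> g"
    proof (cases "h = 0")
      case True then show ?thesis using gpos unfolding s_def by simp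
    next
      case False then have "h > 0" using h0 by simp
      have "s \<le> g / h" unfolding s_def using False by simp
      then show ?thesis using \<open>h > 0\<close> by (simp add: pos_le_divide_eq)
    qed
    define as where "as = vadd (vscale (1 - s) a) (vscale s a')"
    define bs where "bs i = b i - s * d i" for i
    have asV: "as \<in> V n" unfolding as_def using aV a'V by (intro V_add V_scale)
    have bsV: "bs \<in> V n" using bV aV a'V unfolding bs_def d_def V_def by auto
    have ceq2: "c = vadd as bs"
      unfolding ceq as_def bs_def d_def vadd_def vscale_def by (auto simp: algebra_simps)
    have "normX n as \<le> normX n (vscale (1 - s) a) + normX n (vscale s a')"
      unfolding as_def by (rule normX_add)
    also have "\<dots> = (1 - s) * t + s * normX n a'" using s0 unfolding normX_scale t_def by simp
    also have "\<dots> \<le> (1 - s) * t + s * t" using Xa' s0 by (simp add: mult_left_mono)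
    finally have Xas: "normX n as \<le> normX n a" unfolding t_def by (simp add: algebra_simps)
    from opt asV bsV ceq2 have "normX n as > normX n a \<or> norm2 n bs > norm2 n b
       \<or> (normX n as = normX n a \<and> norm2 n bs = norm2 n b)" by blast
    with Xas have "norm2 n b \<le> norm2 n bs" by auto
    then have "ip n b b \<le> ip n bs bs" unfolding norm2_def by simp
    also have "ip n bs bs = ip n b b - 2 * s * g + s^2 * h"
      unfolding bs_def g_def h_def by (rule ip_expand)
    finally have "2 * s * g \<le> s * (s * h)" by (simp add: power2_eq_square algebra_simps)
    also have "\<dots> \<le> s * g" using sh s0 by (simp add: mult_left_mono)
    finally have "s * g \<le> 0" by (simp add: mult.commute)
    moreover have "s * g > 0" using s0(1) gpos by (rule mult_pos_pos)
    ultimately show False by simp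
  qed
  obtain x where x: "x \<in> V n" "normX n x \<le> 1" "ip n b x = normY n b" using dual_att[OF bV] by blast
  have t0: "t \<ge> 0" unfolding t_def by (rule normX_nonneg)
  have "normX n (vscale t x) \<le> t" using x(2) t0 unfolding normX_scale by (simp add: mult_left_le)
  then have "ip n b (vscale t x) \<le> ip n b a" using key V_scale[OF x(1)] by blast
  then show ?thesis using x(3) unfolding ip_scale_right t_def by simp
qed

lemma sgn_abs_eq: "sgn (x::real) * x = \<bar>x\<bar>" by (simp add: abs_sgn)

lemma tight_main: assumes "c \<in> V n" "is_decomp (V n) (normX n) (norm2 n) c a b"
  shows "is_decomp (V n) (normX n) (normY n) c a b"
proof -
  from assms(2) have aV: "a \<in> V n" and bV: "b \<in> V n" and ceq: "c = vadd a b"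
    unfolding is_decomp_def by auto
  have main: "normX n a' = normX n a \<and> normY n b' = normY n b"
    if a'V: "a' \<in> V n" and b'V: "b' \<in> V n" and ceq': "c = vadd a' b'"
      and Xa': "normX n a' \<le> normX n a" and Yb': "normY n b' \<le> normY n b" for a' b'
  proof (cases "a = (\<lambda>_. 0)")
    case True
    then have "normX n a' \<le> 0" using Xa' normX_0 by simp
    then have "normX n a' = 0" using normX_nonneg[of n a'] by simp
    then have a'0: "a' = (\<lambda>_. 0)" using normX_zero a'V by blast
    have "b' = b" using ceq ceq' True a'0 unfolding vadd_def by (auto simp: fun_eq_iff)
    then show ?thesis using True a'0 by simp
  next
    case False
    obtain w where w: "w \<in> W n" "Dm n w = b" "supnormW n w = normY n b" using Y_wit[OF bV] by blast
    define lam where "lam = normY n b"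
    have s1: "normX n a * lam \<le> (\<Sum>j\<le>n. w j * Dstar n a j)"
      using step1[OF assms(2)] adjoint[of n w a] w(2) unfolding lam_def by simp
    have each: "w j * Dstar n a j = lam * \<bar>Dstar n a j\<bar>" if "j \<le> n" for j
    proof -
      define f where "f j = lam * \<bar>Dstar n a j\<bar> - w j * Dstar n a j" for j
      have fnn: "\<forall>j\<in>{..n}. 0 \<le> f j"
      proof
        fix j assume "j \<in> {..n}"
        then have "\<bar>w j\<bar> \<le> lam" using supnorm_ge[of j n w] w(3) unfolding lam_def by simp
        then have "\<bar>w j\<bar> * \<bar>Dstar n a j\<bar> \<le> lam * \<bar>Dstar n a j\<bar>" by (simp add: mult_right_mono)
        moreover have "w j * Dstar n a j \<le> \<bar>w j\<bar> * \<bar>Dstar n a j\<bar>" by (metis abs_ge_self abs_mult)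
        ultimately show "0 \<le> f j" unfolding f_def by linarith
      qed
      have "(\<Sum>j\<le>n. f j) = lam * normX n a - (\<Sum>j\<le>n. w j * Dstar n a j)"
        unfolding f_def normX_def norm1W_def by (simp add: sum_subtractf sum_distrib_left)
      then have "(\<Sum>j\<le>n. f j) \<le> 0" using s1 by (simp add: mult.commute)
      moreover have "0 \<le> (\<Sum>j\<le>n. f j)" using fnn by (intro sum_nonneg) auto
      ultimately have "(\<Sum>j\<le>n. f j) = 0" by simp
      then have "\<forall>j\<in>{..n}. f j = 0" using fnn by (subst sum_nonneg_eq_0_iff[symmetric]) auto
      then show ?thesis using that unfolding f_def by auto
    qed
    define K where "K = {j. j \<le> n \<and> Dstar n a j \<noteq> 0}"
    define \<sigma> where "\<sigma> j = sgn (Dstar n a j)" for j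
    have KN: "K \<subseteq> {..n}" unfolding K_def by auto
    have Kne: "K \<noteq> {}"
    proof
      assume "K = {}"
      then have "\<And>j. j \<le> n \<Longrightarrow> Dstar n a j = 0" unfolding K_def by auto
      then show False using Dstar_inj[OF aV] False by blast
    qed
    have sK: "\<forall>j\<in>K. \<sigma> j = 1 \<or> \<sigma> j = -1" unfolding K_def \<sigma>_def by (auto simp: sgn_if)
    obtain v where v: "\<forall>j\<le>n. \<bar>v j\<bar> \<le> 1" "\<forall>j\<in>K. v j = \<sigma> j"
       "\<forall>j\<le>n. j \<notin> K \<longrightarrow> Dstar n (Dm n v) j = 0" "\<forall>j\<in>K. 0 \<le> \<sigma> j * Dstar n (Dm n v) j"
      using pl[OF KN Kne sK] by blast
    define u where "u = Dm n v"
    have sumD: "(\<Sum>j\<le>n. Dstar n a j) = 0" by (rule sum_Dstar)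
    have pos: "\<exists>p\<in>K. \<sigma> p = 1"
    proof (rule ccontr)
      assume "\<not> ?thesis"
      then have le: "\<forall>j\<in>{..n}. 0 \<le> - Dstar n a j" unfolding K_def \<sigma>_def by (force simp: sgn_if split: if_splits)
      have "(\<Sum>j\<le>n. - Dstar n a j) = 0" using sumD by (simp add: sum_negf)
      then have "\<forall>j\<in>{..n}. - Dstar n a j = 0" using le by (subst sum_nonneg_eq_0_iff[symmetric]) auto
      then show False using Kne unfolding K_def by auto
    qed
    have neg: "\<exists>q\<in>K. \<sigma> q = -1"
    proof (rule ccontr)
      assume "\<not> ?thesis"
      then have le: "\<forall>j\<in>{..n}. 0 \<le> Dstar n a j" unfolding K_def \<sigma>_def by (force simp: sgn_if split: if_splits)
      then have "\<forall>j\<in>{..n}. Dstar n a j = 0" using sumD by (subst sum_nonneg_eq_0_iff[symmetric]) auto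
      then show False using Kne unfolding K_def by auto
    qed
    have Xu: "normX n u > 0"
    proof -
      have "u \<noteq> (\<lambda>_. 0)"
      proof
        assume u0: "u = (\<lambda>_. 0)"
        obtain p where p: "p \<in> K" "\<sigma> p = 1" using pos by blast
        obtain q where q: "q \<in> K" "\<sigma> q = -1" using neg by blast
        have pq: "p \<le> n" "q \<le> n" using p(1) q(1) unfolding K_def by auto
        have u0': "Dm n v = (\<lambda>_. 0)" using u0 unfolding u_def .
        have "v p = v 0" "v q = v 0" using Dm_const[OF u0' pq(1)] Dm_const[OF u0' pq(2)] by auto
        then show False using v(2) p q by auto
      qed
      then have "normX n u \<noteq> 0" using normX_zero[of u n] Dm_V unfolding u_def by blast
      then show ?thesis using normX_nonneg[of n u] by simp
    qed
    have phia: "ip n u a = normX n a"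
    proof -
      have "ip n u a = (\<Sum>j\<le>n. v j * Dstar n a j)" unfolding u_def by (rule adjoint)
      also have "\<dots> = (\<Sum>j\<le>n. \<bar>Dstar n a j\<bar>)"
      proof (rule sum.cong)
        fix j assume "j \<in> {..n}"
        show "v j * Dstar n a j = \<bar>Dstar n a j\<bar>"
        proof (cases "j \<in> K")
          case True then show ?thesis using v(2) sgn_abs_eq unfolding \<sigma>_def by simp
        next
          case False then show ?thesis using \<open>j \<in> {..n}\<close> unfolding K_def by simp
        qed
      qed simp
      finally show ?thesis unfolding normX_def norm1W_def .
    qed
    have phia': "ip n u a' \<le> normX n a'"
    proof -
      have "ip n u a' = (\<Sum>j\<le>n. v j * Dstar n a' j)" unfolding u_def by (rule adjoint)
      also have "\<dots> \<le> (\<Sum>j\<le>n. \<bar>Dstar n a' j\<bar>)"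
      proof (rule sum_mono)
        fix j assume "j \<in> {..n}"
        then have "\<bar>v j\<bar> \<le> 1" using v(1) by auto
        then have "\<bar>v j\<bar> * \<bar>Dstar n a' j\<bar> \<le> \<bar>Dstar n a' j\<bar>" by (simp add: mult_left_le_one_le)
        moreover have "v j * Dstar n a' j \<le> \<bar>v j\<bar> * \<bar>Dstar n a' j\<bar>" by (metis abs_ge_self abs_mult)
        ultimately show "v j * Dstar n a' j \<le> \<bar>Dstar n a' j\<bar>" by linarith
      qed
      finally show ?thesis unfolding normX_def norm1W_def .
    qed
    have phib: "ip n u b = lam * normX n u"
    proof -
      have "ip n u b = ip n (Dm n w) u" using w(2) ip_comm by metis
      also have "\<dots> = (\<Sum>j\<le>n. w j * Dstar n u j)" by (rule adjoint)
      also have "\<dots> = (\<Sum>j\<le>n. lam * \<bar>Dstar n u j\<bar>)"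
      proof (rule sum.cong)
        fix j assume j: "j \<in> {..n}"
        show "w j * Dstar n u j = lam * \<bar>Dstar n u j\<bar>"
        proof (cases "j \<in> K")
          case True
          then have nz: "Dstar n a j \<noteq> 0" unfolding K_def by simp
          have "w j * Dstar n a j = (lam * \<sigma> j) * Dstar n a j"
            using each[of j] j sgn_abs_eq[of "Dstar n a j"] unfolding \<sigma>_def by (simp add: algebra_simps)
          then have wj: "w j = lam * \<sigma> j" using nz by simp
          have sg: "\<sigma> j * Dstar n u j = \<bar>Dstar n u j\<bar>"
          proof -
            have s1: "\<sigma> j = 1 \<or> \<sigma> j = -1" using sK True by auto
            have s2: "0 \<le> \<sigma> j * Dstar n u j" using v(4) True unfolding u_def by auto
            from s1 show ?thesis
            proof
              assume "\<sigma> j = 1" then show ?thesis using s2 by simp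
            next
              assume "\<sigma> j = -1" then show ?thesis using s2 by simp
            qed
          qed
          show ?thesis using wj sg by (simp add: algebra_simps)
        next
          case False then have "Dstar n u j = 0" using v(3) j unfolding u_def by auto
          then show ?thesis by simp
        qed
      qed simp
      finally show ?thesis unfolding normX_def norm1W_def by (simp add: sum_distrib_left)
    qed
    obtain w' where w': "w' \<in> W n" "Dm n w' = b'" "supnormW n w' = normY n b'" using Y_wit[OF b'V] by blast
    have phib': "ip n u b' \<le> normX n u * normY n b'"
      using holder[of n w' u] w' ip_comm[of n u b'] by (simp add: mult.commute)
    have lin: "ip n u a + ip n u b = ip n u a' + ip n u b'"
      using ceq ceq' ip_add_right by metis
    have m1: "normX n u * normY n b' \<le> normX n u * lam"
      using Yb' Xu unfolding lam_def by (simp add: mult_left_mono)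
    have X1: "normX n a' \<ge> normX n a" using phia phia' phib phib' lin m1 by (simp add: mult.commute)
    have "normX n u * normY n b' \<ge> normX n u * lam" using phia phia' phib phib' lin Xa' by (simp add: mult.commute)
    then have "normY n b' \<ge> lam" using Xu by simp
    then show ?thesis using X1 Xa' Yb' unfolding lam_def by simp
  qed
  show ?thesis unfolding is_decomp_def
  proof (intro conjI aV bV ceq ballI impI)
    fix a' b' assume "a' \<in> V n" "b' \<in> V n" "c = vadd a' b'"
    then show "normX n a' > normX n a \<or> normY n b' > normY n b \<or> (normX n a' = normX n a \<and> normY n b' = normY n b)"
      using main by force
  qed
qed


theorem mainTheorem17:
  fixes n :: nat
  shows "is_norm_on (V n) (normX n) \<and> is_norm_on (V n) (normY n)
    \<and> (\<forall>a\<in>V n. \<exists>b\<in>W n. Dm n b = a \<and> supnormW n b = normY n a)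
    \<and> (\<forall>a\<in>V n. normY n a = Sup {ip n a x | x. x \<in> V n \<and> normX n x \<le> 1})
    \<and> (\<forall>c\<in>V n. tight (V n) (normX n) (normY n) (norm2 n) c)"
  using normX_norm normY_norm Y_wit duality tight_main unfolding tight_def by blast

end
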